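(* Let $q \ge 2$ be a prime and $n \ge 1$. Let $S \subset \mathbb{F}_q^n \times \mathbb{F}_q^n$ be a set containing no three points of the form $$(x,y),\ (x,y+d),\ (x+d,y')$$ with $x,y,y' \in \mathbb{F}_q^n$ and $d \in \mathbb{F}_q^n \setminus \{0\}$. Then $$|S| \le 3\, q^{(2-c_q)n},$$ where $c_q$ is the positive constant depending only on $q$ defined by $$q^{1-c_q} = \inf_{0<x<1} x^{-(q-1)/3}\,(1+x+\dots+x^{q-1}).$$ *)

theory Defs
  imports "HOL-Analysis.Analysis"
begin

text \<open>The vector space F_q^n (q prime) is modelled concretely: a vector is a function
  nat => nat with entries in {0..<q} at coordinates i < n and value 0 elsewhere;
  addition is coordinatewise modulo q.\<close>

definition Fqn :: "nat \<Rightarrow> nat \<Rightarrow> (nat \<Rightarrow> nat) set" where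
  "Fqn q n = {v. (\<forall>i<n. v i < q) \<and> (\<forall>i\<ge>n. v i = 0)}"

definition vadd :: "nat \<Rightarrow> (nat \<Rightarrow> nat) \<Rightarrow> (nat \<Rightarrow> nat) \<Rightarrow> (nat \<Rightarrow> nat)" where
  "vadd q v w = (\<lambda>i. (v i + w i) mod q)"

definition c_const :: "nat \<Rightarrow> real" where
  "c_const q = 1 - log (real q)
     (INF x\<in>{0<..<1::real}. x powr (- (real q - 1) / 3) * (\<Sum>i<q. x ^ i))"

end

theory Submission
  imports Defs "HOL-Number_Theory.Number_Theory"
begin

lemma linalg_kernel:
  fixes q :: nat and L :: "'j \<Rightarrow> 'k \<Rightarrow> int"
  assumes pq: "prime q" and fJ: "finite J"
  shows "finite K \<Longrightarrow> card J < card K \<Longrightarrow>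
    \<exists>w. (\<exists>k\<in>K. \<not> int q dvd w k) \<and> (\<forall>j\<in>J. int q dvd (\<Sum>k\<in>K. L j k * w k))"
  using fJ
proof (induction J arbitrary: K L rule: finite_induct)
  case empty
  then obtain k where k: "k \<in> K" by fastforce
  have "\<not> int q dvd 1" using prime_gt_1_nat[OF pq] by simp
  then show ?case using k by (intro exI[of _ "\<lambda>k'. if k' = k then 1 else 0"]) auto
next
  case (insert j J)
  show ?case
  proof (cases "\<forall>k\<in>K. int q dvd L j k")
    case True
    from insert.IH[of K L] insert.prems obtain w where
      w: "\<exists>k\<in>K. \<not> int q dvd w k" "\<forall>j\<in>J. int q dvd (\<Sum>k\<in>K. L j k * w k)"
      using insert.hyps by auto
    have "int q dvd (\<Sum>k\<in>K. L j k * w k)"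
      using True by (intro dvd_sum) auto
    then show ?thesis using w by auto
  next
    case False
    then obtain k0 where k0: "k0 \<in> K" "\<not> int q dvd L j k0" by auto
    define K' where "K' = K - {k0}"
    define L' where "L' = (\<lambda>j' k. L j' k * L j k0 - L j' k0 * L j k)"
    have fK': "finite K'" using insert.prems K'_def by auto
    have cK': "card J < card K'" using insert.prems insert.hyps k0 K'_def by auto
    from insert.IH[OF fK' cK', of L'] obtain w' where
      w': "\<exists>k\<in>K'. \<not> int q dvd w' k" "\<forall>j\<in>J. int q dvd (\<Sum>k\<in>K'. L' j k * w' k)" by auto
    define w where "w = (\<lambda>k. if k = k0 then - (\<Sum>k\<in>K'. L j k * w' k) else L j k0 * w' k)"
    have split: "(\<Sum>k\<in>K. f k) = f k0 + (\<Sum>k\<in>K'. f k)" for f :: "_ \<Rightarrow> int"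
      using insert.prems(1) k0(1) K'_def by (simp add: sum.remove)
    have wK': "\<And>k. k \<in> K' \<Longrightarrow> w k = L j k0 * w' k" using K'_def w_def by auto
    have "(\<Sum>k\<in>K. L j k * w k) = 0"
      unfolding split using wK'
      by (simp add: w_def sum_distrib_left algebra_simps)
    moreover have "int q dvd (\<Sum>k\<in>K. L j' k * w k)" if "j' \<in> J" for j'
    proof -
      have "(\<Sum>k\<in>K. L j' k * w k) = (\<Sum>k\<in>K'. L' j' k * w' k)"
        unfolding split using wK'
        by (simp add: w_def L'_def sum_distrib_left sum_subtractf algebra_simps)
      then show ?thesis using w'(2) that by simp
    qed
    moreover have "\<exists>k\<in>K. \<not> int q dvd w k"
    proof -
      from w'(1) obtain k1 where k1: "k1 \<in> K'" "\<not> int q dvd w' k1" by auto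
      have pi: "prime (int q)" using pq by simp
      have "\<not> int q dvd w k1"
        using k1 wK' k0(2) prime_dvd_mult_iff[OF pi] by auto
      then show ?thesis using k1 K'_def by auto
    qed
    ultimately show ?thesis by auto
  qed
qed

lemma diag_rank:
  fixes q :: nat and f g :: "'j \<Rightarrow> 'k \<Rightarrow> int"
  assumes pq: "prime q" and fJ: "finite J" and fK: "finite K"
    and nd: "\<not> int q dvd d"
    and eq: "\<And>y1 y2. y1 \<in> K \<Longrightarrow> y2 \<in> K \<Longrightarrow>
       int q dvd ((\<Sum>j\<in>J. f j y1 * g j y2) - (if y1 = y2 then d else 0))"
  shows "card K \<le> card J"
proof (rule ccontr)
  assume "\<not> card K \<le> card J"
  then have "card J < card K" by simp
  from linalg_kernel[OF pq fJ fK this, of f] obtain w where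
    w: "\<exists>k\<in>K. \<not> int q dvd w k" "\<forall>j\<in>J. int q dvd (\<Sum>k\<in>K. f j k * w k)" by auto
  from w(1) obtain k1 where k1: "k1 \<in> K" "\<not> int q dvd w k1" by auto
  have A: "int q dvd (\<Sum>y1\<in>K. w y1 * ((\<Sum>j\<in>J. f j y1 * g j k1) - (if y1 = k1 then d else 0)))"
    using eq k1(1) by (intro dvd_sum) auto
  have B: "(\<Sum>y1\<in>K. w y1 * ((\<Sum>j\<in>J. f j y1 * g j k1) - (if y1 = k1 then d else 0)))
     = (\<Sum>j\<in>J. g j k1 * (\<Sum>y1\<in>K. f j y1 * w y1)) - w k1 * d"
  proof -
    have "(\<Sum>y1\<in>K. w y1 * (if y1 = k1 then d else 0)) = w k1 * d"
    proof -
      have "(\<Sum>y1\<in>K. w y1 * (if y1 = k1 then d else 0)) = (\<Sum>y1\<in>K. if y1 = k1 then w y1 * d else 0)"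
        by (rule sum.cong) auto
      then show ?thesis using fK k1(1) by simp
    qed
    moreover have "(\<Sum>y1\<in>K. w y1 * (\<Sum>j\<in>J. f j y1 * g j k1))
        = (\<Sum>j\<in>J. g j k1 * (\<Sum>y1\<in>K. f j y1 * w y1))"
    proof -
      have "(\<Sum>y1\<in>K. w y1 * (\<Sum>j\<in>J. f j y1 * g j k1))
          = (\<Sum>y1\<in>K. \<Sum>j\<in>J. g j k1 * (f j y1 * w y1))"
        by (simp add: sum_distrib_left mult.commute mult.left_commute)
      also have "\<dots> = (\<Sum>j\<in>J. \<Sum>y1\<in>K. g j k1 * (f j y1 * w y1))"
        by (rule sum.swap)
      also have "\<dots> = (\<Sum>j\<in>J. g j k1 * (\<Sum>y1\<in>K. f j y1 * w y1))"
        by (simp add: sum_distrib_left)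
      finally show ?thesis .
    qed
    ultimately show ?thesis by (simp add: right_diff_distrib sum_subtractf)
  qed
  have C: "int q dvd (\<Sum>j\<in>J. g j k1 * (\<Sum>y1\<in>K. f j y1 * w y1))"
    using w(2) by (intro dvd_sum) auto
  from A B C have "int q dvd w k1 * d"
    using dvd_diff[OF C A[unfolded B]] by simp
  moreover have pi: "prime (int q)" using pq by simp
  ultimately show False using k1(2) nd prime_dvd_mult_iff[OF pi] by auto
qed

lemma Fqn_Suc: "Fqn q (Suc n) = (\<lambda>(a,j). a(n:=j)) ` (Fqn q n \<times> {..<q})"
proof (intro Set.set_eqI iffI)
  fix b assume b: "b \<in> Fqn q (Suc n)"
  have "b = (\<lambda>(a,j). a(n:=j)) (b(n:=0), b n)" by auto
  moreover have "(b(n:=0), b n) \<in> Fqn q n \<times> {..<q}"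
    using b by (auto simp: Fqn_def)
  ultimately show "b \<in> (\<lambda>(a,j). a(n:=j)) ` (Fqn q n \<times> {..<q})" by blast
next
  fix b assume "b \<in> (\<lambda>(a,j). a(n:=j)) ` (Fqn q n \<times> {..<q})"
  then show "b \<in> Fqn q (Suc n)" by (auto simp: Fqn_def less_Suc_eq)
qed

lemma Fqn_inj: "inj_on (\<lambda>(a,j). a(n:=j)) (Fqn q n \<times> {..<q})"
proof (rule inj_onI, clarify)
  fix a j a' j' assume a: "a \<in> Fqn q n" "a' \<in> Fqn q n" and e: "a(n := j) = a'(n := j')"
  have "j = j'" using fun_cong[OF e, of n] by simp
  moreover have "a = a'"
  proof
    fix i show "a i = a' i"
      using fun_cong[OF e, of i] a by (cases "i = n") (auto simp: Fqn_def)
  qed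
  ultimately show "a = a' \<and> j = j'" by simp
qed

lemma finite_Fqn: "finite (Fqn q n)"
proof (induction n)
  case 0
  have "Fqn q 0 = {\<lambda>_. 0}" by (auto simp: Fqn_def)
  then show ?case by simp
next
  case (Suc n)
  then show ?case unfolding Fqn_Suc by auto
qed

lemma sum_prod_Fqn:
  fixes g :: "nat \<Rightarrow> nat \<Rightarrow> 'a::comm_semiring_1"
  shows "(\<Sum>a\<in>Fqn q n. \<Prod>i<n. g i (a i)) = (\<Prod>i<n. \<Sum>j<q. g i j)"
proof (induction n)
  case 0
  have "Fqn q 0 = {\<lambda>_. 0}" by (auto simp: Fqn_def)
  then show ?case by simp
next
  case (Suc n)
  have "(\<Sum>b\<in>Fqn q (Suc n). \<Prod>i<Suc n. g i (b i))
      = (\<Sum>p\<in>Fqn q n \<times> {..<q}. \<Prod>i<Suc n. g i (((\<lambda>(a,j). a(n:=j)) p) i))"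
    unfolding Fqn_Suc by (rule sum.reindex[OF Fqn_inj, unfolded comp_def])
  also have "\<dots> = (\<Sum>p\<in>Fqn q n \<times> {..<q}. (\<Prod>i<n. g i (fst p i)) * g n (snd p))"
    by (rule sum.cong) (auto simp: prod.lessThan_Suc)
  also have "\<dots> = (\<Sum>a\<in>Fqn q n. \<Sum>j<q. (\<Prod>i<n. g i (a i)) * g n j)"
    unfolding sum.cartesian_product by (simp add: split_beta)
  also have "\<dots> = (\<Sum>a\<in>Fqn q n. \<Prod>i<n. g i (a i)) * (\<Sum>j<q. g n j)"
    by (rule sum_product[symmetric])
  finally show ?case by (simp only: Suc.IH prod.lessThan_Suc)
qed

lemma card_Fqn: "card (Fqn q n) = q ^ n"
proof -
  have "card (Fqn q n) = (\<Sum>a\<in>Fqn q n. \<Prod>i<n. (\<lambda>i j. 1::nat) i (a i))" by simp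
  also have "\<dots> = q ^ n" by (subst sum_prod_Fqn) simp
  finally show ?thesis .
qed

definition T3 :: "nat \<Rightarrow> (nat \<times> nat \<times> nat) set" where
  "T3 N = (SIGMA j:{..N}. SIGMA k:{..N-j}. {..N-j-k})"

lemma finite_T3: "finite (T3 N)" unfolding T3_def by auto

lemma T3_deg: "(j,k,l) \<in> T3 N \<Longrightarrow> j + k + l \<le> N" unfolding T3_def by auto

lemma T3_zero: "(0,0,0) \<in> T3 N" unfolding T3_def by auto

lemma coord_expand:
  fixes X :: int and N :: nat
  shows "\<exists>\<kappa>. \<forall>u v w :: int. 1 - (w - X - v + u)^N =
           (\<Sum>t\<in>T3 N. \<kappa> t * u^(fst t) * v^(snd (snd t)) * w^(fst (snd t)))"
proof -
  define c where "c = (\<lambda>(j,k,l). (of_nat (N choose j) * of_nat ((N-j) choose k) * of_nat ((N-j-k) choose l)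
       * (-1)^l * (-X)^(N-j-k-l) :: int))"
  have main: "(w - X - v + u)^N = (\<Sum>t\<in>T3 N. c t * u^(fst t) * v^(snd (snd t)) * w^(fst (snd t)))"
    for u v w :: int
  proof -
    have e1: "(w - X - v + u) = u + (w + (-v + -X))" by simp
    have "(w - X - v + u)^N = (\<Sum>j\<le>N. of_nat (N choose j) * u^j * (w + (-v + -X))^(N-j))"
      unfolding e1 by (rule binomial_ring)
    also have "\<dots> = (\<Sum>j\<le>N. \<Sum>k\<le>N-j. \<Sum>l\<le>N-j-k. c (j,k,l) * u^j * v^l * w^k)"
    proof (rule sum.cong[OF refl])
      fix j assume j: "j \<in> {..N}"
      have "(w + (-v + -X))^(N-j) = (\<Sum>k\<le>N-j. of_nat ((N-j) choose k) * w^k * (-v + -X)^(N-j-k))"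
        by (rule binomial_ring)
      also have "\<dots> = (\<Sum>k\<le>N-j. of_nat ((N-j) choose k) * w^k *
           (\<Sum>l\<le>N-j-k. of_nat ((N-j-k) choose l) * (-v)^l * (-X)^(N-j-k-l)))"
        by (simp only: binomial_ring)
      finally have "(w + (-v + -X))^(N-j) = \<dots>" .
      then show "of_nat (N choose j) * u^j * (w + (-v + -X))^(N-j) =
          (\<Sum>k\<le>N-j. \<Sum>l\<le>N-j-k. c (j,k,l) * u^j * v^l * w^k)"
        by (simp add: sum_distrib_left c_def power_minus[of v] algebra_simps)
    qed
    also have "\<dots> = (\<Sum>t\<in>T3 N. c t * u^(fst t) * v^(snd (snd t)) * w^(fst (snd t)))"
      unfolding T3_def by (simp add: sum.Sigma split_beta)
    finally show ?thesis .
  qed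
  define \<kappa> where "\<kappa> = (\<lambda>t. (if t = (0,0,0) then 1 else 0) - c t)"
  have "1 - (w - X - v + u)^N = (\<Sum>t\<in>T3 N. \<kappa> t * u^(fst t) * v^(snd (snd t)) * w^(fst (snd t)))"
    for u v w :: int
  proof -
    have "(\<Sum>t\<in>T3 N. (if t = (0,0,0) then 1 else 0) * u^(fst t) * v^(snd (snd t)) * w^(fst (snd t)))
        = (\<Sum>t\<in>T3 N. if t = (0,0,0) then 1 else 0)"
      by (rule sum.cong) auto
    also have "\<dots> = 1" using finite_T3 T3_zero by simp
    finally have h: "(\<Sum>t\<in>T3 N. (if t = (0,0,0) then 1 else 0) * u^(fst t) * v^(snd (snd t)) * w^(fst (snd t))) = 1" .
    show ?thesis unfolding main \<kappa>_def using h
      by (simp add: left_diff_distrib sum_subtractf)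
  qed
  then show ?thesis by blast
qed

definition mnm :: "nat \<Rightarrow> (nat \<Rightarrow> nat) \<Rightarrow> (nat \<Rightarrow> nat) \<Rightarrow> int" where
  "mnm n y a = (\<Prod>i<n. int (y i) ^ a i)"

definition Fpoly :: "nat \<Rightarrow> nat \<Rightarrow> (nat \<Rightarrow> nat) \<Rightarrow> (nat \<Rightarrow> nat) \<Rightarrow> (nat \<Rightarrow> nat) \<Rightarrow> (nat \<Rightarrow> nat) \<Rightarrow> int" where
  "Fpoly q n x y1 y2 c = (\<Prod>i<n. 1 - (int (c i) - int (x i) - int (y2 i) + int (y1 i))^(q-1))"

definition dgr :: "nat \<Rightarrow> (nat \<Rightarrow> nat) \<Rightarrow> nat" where
  "dgr n a = (\<Sum>i<n. a i)"

definition Pi3 :: "nat \<Rightarrow> nat \<Rightarrow> (nat \<Rightarrow> nat \<times> nat \<times> nat) set" where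
  "Pi3 q n = PiE {..<n} (\<lambda>_. T3 (q-1))"

definition ea :: "nat \<Rightarrow> (nat \<Rightarrow> nat \<times> nat \<times> nat) \<Rightarrow> nat \<Rightarrow> nat" where
  "ea n \<tau> = (\<lambda>i. if i < n then fst (\<tau> i) else 0)"
definition eb :: "nat \<Rightarrow> (nat \<Rightarrow> nat \<times> nat \<times> nat) \<Rightarrow> nat \<Rightarrow> nat" where
  "eb n \<tau> = (\<lambda>i. if i < n then snd (snd (\<tau> i)) else 0)"
definition ee :: "nat \<Rightarrow> (nat \<Rightarrow> nat \<times> nat \<times> nat) \<Rightarrow> nat \<Rightarrow> nat" where
  "ee n \<tau> = (\<lambda>i. if i < n then fst (snd (\<tau> i)) else 0)"

lemma finite_Pi3: "finite (Pi3 q n)"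
  unfolding Pi3_def by (intro finite_PiE) (auto simp: finite_T3)

lemma Pi3_deg:
  assumes "\<tau> \<in> Pi3 q n"
  shows "dgr n (ea n \<tau>) + dgr n (eb n \<tau>) + dgr n (ee n \<tau>) \<le> n * (q - 1)"
proof -
  have "dgr n (ea n \<tau>) + dgr n (eb n \<tau>) + dgr n (ee n \<tau>)
      = (\<Sum>i<n. fst (\<tau> i) + fst (snd (\<tau> i)) + snd (snd (\<tau> i)))"
    by (simp add: dgr_def ea_def eb_def ee_def sum.distrib)
  also have "\<dots> \<le> (\<Sum>i<n. q - 1)"
  proof (rule sum_mono)
    fix i assume "i \<in> {..<n}"
    then have "\<tau> i \<in> T3 (q-1)" using assms unfolding Pi3_def by auto
    then show "fst (\<tau> i) + fst (snd (\<tau> i)) + snd (snd (\<tau> i)) \<le> q - 1"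
      using T3_deg by (cases "\<tau> i") auto
  qed
  finally show ?thesis by simp
qed

lemma Pi3_Fqn:
  assumes "\<tau> \<in> Pi3 q n" "q \<ge> 1"
  shows "ea n \<tau> \<in> Fqn q n" "eb n \<tau> \<in> Fqn q n" "ee n \<tau> \<in> Fqn q n"
proof -
  have "\<And>i. i < n \<Longrightarrow> fst (\<tau> i) + fst (snd (\<tau> i)) + snd (snd (\<tau> i)) \<le> q - 1"
  proof -
    fix i assume "i < n"
    then have "\<tau> i \<in> T3 (q-1)" using assms unfolding Pi3_def by auto
    then show "fst (\<tau> i) + fst (snd (\<tau> i)) + snd (snd (\<tau> i)) \<le> q - 1"
      using T3_deg by (cases "\<tau> i") auto
  qed
  then show "ea n \<tau> \<in> Fqn q n" "eb n \<tau> \<in> Fqn q n" "ee n \<tau> \<in> Fqn q n"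
    using assms(2) by (fastforce simp: Fqn_def ea_def eb_def ee_def)+
qed

lemma multi_expand:
  "\<exists>K. \<forall>y1 y2 c. Fpoly q n x y1 y2 c =
     (\<Sum>\<tau>\<in>Pi3 q n. K \<tau> * mnm n y1 (ea n \<tau>) * mnm n y2 (eb n \<tau>) * mnm n c (ee n \<tau>))"
proof -
  have "\<forall>i. \<exists>\<kappa>. \<forall>u v w :: int. 1 - (w - int (x i) - v + u)^(q-1) =
           (\<Sum>t\<in>T3 (q-1). \<kappa> t * u^(fst t) * v^(snd (snd t)) * w^(fst (snd t)))"
    using coord_expand by blast
  from choice[OF this] obtain \<kappa> where \<kappa>0: "\<forall>i. \<forall>u v w :: int. 1 - (w - int (x i) - v + u)^(q-1) =
           (\<Sum>t\<in>T3 (q-1). \<kappa> i t * u^(fst t) * v^(snd (snd t)) * w^(fst (snd t)))"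
    by blast
  have \<kappa>: "\<And>i u v w. 1 - (w - int (x i) - v + u)^(q-1) =
           (\<Sum>t\<in>T3 (q-1). \<kappa> i t * u^(fst t) * v^(snd (snd t)) * w^(fst (snd t)))"
    using \<kappa>0 by blast
  define K where "K = (\<lambda>\<tau>. \<Prod>i<n. \<kappa> i (\<tau> i))"
  have "Fpoly q n x y1 y2 c =
     (\<Sum>\<tau>\<in>Pi3 q n. K \<tau> * mnm n y1 (ea n \<tau>) * mnm n y2 (eb n \<tau>) * mnm n c (ee n \<tau>))"
    for y1 y2 c
  proof -
    have "Fpoly q n x y1 y2 c = (\<Prod>i<n. \<Sum>t\<in>T3 (q-1). \<kappa> i t * int (y1 i)^(fst t) * int (y2 i)^(snd (snd t)) * int (c i)^(fst (snd t)))"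
      unfolding Fpoly_def by (simp only: \<kappa>)
    also have "\<dots> = (\<Sum>\<tau>\<in>Pi3 q n. \<Prod>i<n. \<kappa> i (\<tau> i) * int (y1 i)^(fst (\<tau> i)) * int (y2 i)^(snd (snd (\<tau> i))) * int (c i)^(fst (snd (\<tau> i))))"
      unfolding Pi3_def by (rule prod_sum_PiE) (auto simp: finite_T3)
    also have "\<dots> = (\<Sum>\<tau>\<in>Pi3 q n. K \<tau> * mnm n y1 (ea n \<tau>) * mnm n y2 (eb n \<tau>) * mnm n c (ee n \<tau>))"
      by (rule sum.cong[OF refl]) (simp add: K_def mnm_def ea_def eb_def ee_def prod.distrib)
    finally show ?thesis .
  qed
  then show ?thesis by blast
qed

definition Elow :: "nat \<Rightarrow> nat \<Rightarrow> (nat \<Rightarrow> nat) set" where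
  "Elow q n = {a \<in> Fqn q n. 3 * dgr n a \<le> (q - 1) * n}"

lemma finite_Elow: "finite (Elow q n)"
  unfolding Elow_def using finite_Fqn by auto

definition Vs :: "nat \<Rightarrow> (nat \<Rightarrow> nat) set \<Rightarrow> ((nat \<Rightarrow> nat) \<Rightarrow> int) \<Rightarrow> (nat \<Rightarrow> nat) \<Rightarrow> int" where
  "Vs n A v e = (\<Sum>c\<in>A. v c * mnm n c e)"

lemma col_bound:
  fixes q n :: nat and A Sx :: "(nat \<Rightarrow> nat) set" and v :: "(nat \<Rightarrow> nat) \<Rightarrow> int"
  assumes pq: "prime q" and fA: "finite A" and fS: "finite Sx"
    and vE: "\<And>e. e \<in> Elow q n \<Longrightarrow> int q dvd Vs n A v e"
    and nd: "\<not> int q dvd d"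
    and H: "\<And>y1 y2. y1 \<in> Sx \<Longrightarrow> y2 \<in> Sx \<Longrightarrow>
       int q dvd ((\<Sum>c\<in>A. v c * Fpoly q n x y1 y2 c) - (if y1 = y2 then d else 0))"
  shows "card Sx \<le> 2 * card (Elow q n)"
proof -
  have q1: "q \<ge> 1" using prime_gt_1_nat[OF pq] by simp
  obtain K where K: "\<And>y1 y2 c. Fpoly q n x y1 y2 c =
     (\<Sum>\<tau>\<in>Pi3 q n. K \<tau> * mnm n y1 (ea n \<tau>) * mnm n y2 (eb n \<tau>) * mnm n c (ee n \<tau>))"
    using multi_expand by blast
  define E where "E = Elow q n"
  define PP where "PP = Pi3 q n"
  define P1 where "P1 = (\<lambda>\<tau>. 3 * dgr n (ea n \<tau>) \<le> (q - 1) * n)"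
  define P2 where "P2 = (\<lambda>\<tau>. 3 * dgr n (eb n \<tau>) \<le> (q - 1) * n)"
  define h where "h = (\<lambda>y1 y2 \<tau>. K \<tau> * mnm n y1 (ea n \<tau>) * mnm n y2 (eb n \<tau>) * Vs n A v (ee n \<tau>))"
  have fPi: "finite PP" unfolding PP_def by (rule finite_Pi3)
  have fE: "finite E" unfolding E_def by (rule finite_Elow)
  have D: "(\<Sum>c\<in>A. v c * Fpoly q n x y1 y2 c) = (\<Sum>\<tau>\<in>PP. h y1 y2 \<tau>)" for y1 y2
  proof -
    have "(\<Sum>c\<in>A. v c * Fpoly q n x y1 y2 c) =
      (\<Sum>c\<in>A. \<Sum>\<tau>\<in>PP. v c * (K \<tau> * mnm n y1 (ea n \<tau>) * mnm n y2 (eb n \<tau>) * mnm n c (ee n \<tau>)))"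
      unfolding K PP_def by (simp add: sum_distrib_left)
    also have "\<dots> = (\<Sum>\<tau>\<in>PP. \<Sum>c\<in>A. v c * (K \<tau> * mnm n y1 (ea n \<tau>) * mnm n y2 (eb n \<tau>) * mnm n c (ee n \<tau>)))"
      by (rule sum.swap)
    also have "\<dots> = (\<Sum>\<tau>\<in>PP. h y1 y2 \<tau>)"
      by (rule sum.cong[OF refl]) (simp add: h_def Vs_def sum_distrib_left mult.commute mult.left_commute)
    finally show ?thesis .
  qed
  have split: "(\<Sum>\<tau>\<in>PP. h y1 y2 \<tau>) = (\<Sum>\<tau>\<in>{\<tau>\<in>PP. P1 \<tau>}. h y1 y2 \<tau>)
      + (\<Sum>\<tau>\<in>{\<tau>\<in>PP. \<not> P1 \<tau> \<and> P2 \<tau>}. h y1 y2 \<tau>) + (\<Sum>\<tau>\<in>{\<tau>\<in>PP. \<not> P1 \<tau> \<and> \<not> P2 \<tau>}. h y1 y2 \<tau>)"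
    for y1 y2
  proof -
    have "(\<Sum>\<tau>\<in>PP. h y1 y2 \<tau>) = (\<Sum>\<tau>\<in>PP. (if P1 \<tau> then h y1 y2 \<tau> else 0)
       + (if \<not> P1 \<tau> \<and> P2 \<tau> then h y1 y2 \<tau> else 0) + (if \<not> P1 \<tau> \<and> \<not> P2 \<tau> then h y1 y2 \<tau> else 0))"
      by (rule sum.cong) auto
    then show ?thesis using fPi by (simp add: sum.distrib sum.inter_filter)
  qed
  have z3: "int q dvd (\<Sum>\<tau>\<in>{\<tau>\<in>PP. \<not> P1 \<tau> \<and> \<not> P2 \<tau>}. h y1 y2 \<tau>)" for y1 y2
  proof (rule dvd_sum)
    fix \<tau> assume t: "\<tau> \<in> {\<tau>\<in>PP. \<not> P1 \<tau> \<and> \<not> P2 \<tau>}"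
    then have "\<tau> \<in> Pi3 q n" unfolding PP_def by simp
    from Pi3_deg[OF this] Pi3_Fqn[OF this q1] t have "ee n \<tau> \<in> E"
      unfolding E_def Elow_def P1_def P2_def by (auto simp: mult.commute[of n])
    then show "int q dvd h y1 y2 \<tau>" unfolding h_def E_def using vE by simp
  qed
  define Pa where "Pa = (\<lambda>a y2. \<Sum>\<tau>\<in>{\<tau>\<in>{\<tau>\<in>PP. P1 \<tau>}. ea n \<tau> = a}. K \<tau> * mnm n y2 (eb n \<tau>) * Vs n A v (ee n \<tau>))"
  define Qb where "Qb = (\<lambda>b y1. \<Sum>\<tau>\<in>{\<tau>\<in>{\<tau>\<in>PP. \<not> P1 \<tau> \<and> P2 \<tau>}. eb n \<tau> = b}. K \<tau> * mnm n y1 (ea n \<tau>) * Vs n A v (ee n \<tau>))"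
  have s1: "(\<Sum>\<tau>\<in>{\<tau>\<in>PP. P1 \<tau>}. h y1 y2 \<tau>) = (\<Sum>a\<in>E. mnm n y1 a * Pa a y2)" for y1 y2
  proof -
    have "ea n ` {\<tau>\<in>PP. P1 \<tau>} \<subseteq> E"
      using Pi3_Fqn[OF _ q1] unfolding E_def Elow_def P1_def PP_def by auto
    then have "(\<Sum>\<tau>\<in>{\<tau>\<in>PP. P1 \<tau>}. h y1 y2 \<tau>) = (\<Sum>a\<in>E. \<Sum>\<tau>\<in>{\<tau>\<in>{\<tau>\<in>PP. P1 \<tau>}. ea n \<tau> = a}. h y1 y2 \<tau>)"
      using fPi fE by (intro sum.group[symmetric]) auto
    also have "\<dots> = (\<Sum>a\<in>E. mnm n y1 a * Pa a y2)"
      unfolding Pa_def h_def by (rule sum.cong[OF refl]) (auto simp: sum_distrib_left intro!: sum.cong)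
    finally show ?thesis .
  qed
  have s2: "(\<Sum>\<tau>\<in>{\<tau>\<in>PP. \<not> P1 \<tau> \<and> P2 \<tau>}. h y1 y2 \<tau>) = (\<Sum>b\<in>E. Qb b y1 * mnm n y2 b)" for y1 y2
  proof -
    have "eb n ` {\<tau>\<in>PP. \<not> P1 \<tau> \<and> P2 \<tau>} \<subseteq> E"
      using Pi3_Fqn[OF _ q1] unfolding E_def Elow_def P2_def PP_def by auto
    then have "(\<Sum>\<tau>\<in>{\<tau>\<in>PP. \<not> P1 \<tau> \<and> P2 \<tau>}. h y1 y2 \<tau>) = (\<Sum>b\<in>E. \<Sum>\<tau>\<in>{\<tau>\<in>{\<tau>\<in>PP. \<not> P1 \<tau> \<and> P2 \<tau>}. eb n \<tau> = b}. h y1 y2 \<tau>)"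
      using fPi fE by (intro sum.group[symmetric]) auto
    also have "\<dots> = (\<Sum>b\<in>E. Qb b y1 * mnm n y2 b)"
      unfolding Qb_def h_def by (rule sum.cong[OF refl]) (auto simp: sum_distrib_right intro!: sum.cong)
    finally show ?thesis .
  qed
  define f where "f = (\<lambda>j::((nat\<Rightarrow>nat) + (nat\<Rightarrow>nat)). case j of Inl a \<Rightarrow> (\<lambda>y. mnm n y a) | Inr b \<Rightarrow> Qb b)"
  define g where "g = (\<lambda>j::((nat\<Rightarrow>nat) + (nat\<Rightarrow>nat)). case j of Inl a \<Rightarrow> Pa a | Inr b \<Rightarrow> (\<lambda>y. mnm n y b))"
  have fg: "(\<Sum>j\<in>E <+> E. f j y1 * g j y2) = (\<Sum>a\<in>E. mnm n y1 a * Pa a y2) + (\<Sum>b\<in>E. Qb b y1 * mnm n y2 b)"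
    for y1 y2 using fE by (simp add: sum.Plus f_def g_def)
  have "card Sx \<le> card (E <+> E)"
  proof (rule diag_rank[OF pq _ fS nd])
    show "finite (E <+> E)" using fE by simp
    fix y1 y2 assume y: "y1 \<in> Sx" "y2 \<in> Sx"
    have eq: "(\<Sum>j\<in>E <+> E. f j y1 * g j y2) - (if y1 = y2 then d else 0)
       = ((\<Sum>c\<in>A. v c * Fpoly q n x y1 y2 c) - (if y1 = y2 then d else 0))
         - (\<Sum>\<tau>\<in>{\<tau>\<in>PP. \<not> P1 \<tau> \<and> \<not> P2 \<tau>}. h y1 y2 \<tau>)"
      unfolding fg D split s1 s2 by simp
    show "int q dvd ((\<Sum>j\<in>E <+> E. f j y1 * g j y2) - (if y1 = y2 then d else 0))"
      unfolding eq by (rule dvd_diff[OF H[OF y] z3])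
  qed
  then show ?thesis using fE by (simp add: card_Plus E_def)
qed

lemma factor_delta:
  fixes z :: int
  assumes pq: "prime q"
  shows "int q dvd ((1 - z^(q-1)) - (if int q dvd z then 1 else 0))"
proof (cases "int q dvd z")
  case True
  have q1: "q - 1 \<ge> 1" using prime_ge_2_nat[OF pq] by simp
  have "int q dvd z^(q-1)" using True q1 by (simp add: dvd_power_le[of _ _ 1, simplified]) 
  then show ?thesis using True by simp
next
  case False
  define a where "a = nat (z mod int q)"
  have q0: "int q > 0" using prime_gt_0_nat[OF pq] by simp
  have az: "int a = z mod int q" unfolding a_def using q0 by simp
  have "\<not> q dvd a"
  proof
    assume "q dvd a"
    then have "int q dvd int a" by simp
    then have "int q dvd z mod int q" using az by simp
    then show False using False by (simp add: dvd_mod_iff)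
  qed
  from fermat_theorem[OF pq this] have "[a^(q-1) = 1] (mod q)" .
  then have "[int a^(q-1) = 1] (mod int q)" using cong_int_iff[of "a^(q-1)" 1 q] by simp
  moreover have "[z = int a] (mod int q)" using az by (simp add: cong_def)
  then have "[z^(q-1) = int a^(q-1)] (mod int q)" by (rule cong_pow)
  ultimately have "[z^(q-1) = 1] (mod int q)" using cong_trans by blast
  then have "int q dvd (z^(q-1) - 1)" by (simp add: cong_iff_dvd_diff)
  then have "int q dvd -(z^(q-1) - 1)" by (simp only: dvd_minus_iff)
  then show ?thesis using False by simp
qed

lemma prod_indicator:
  "(\<Prod>i<(n::nat). (if P i then 1 else 0) :: int) = (if \<forall>i<n. P i then 1 else 0)"
proof (induction n)
  case 0 then show ?case by simp
next
  case (Suc n) then show ?case by (auto simp: less_Suc_eq)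
qed

lemma Fpoly_delta:
  assumes pq: "prime q"
  shows "int q dvd (Fpoly q n x y1 y2 c -
     (if \<forall>i<n. int q dvd (int (c i) - int (x i) - int (y2 i) + int (y1 i)) then 1 else 0))"
proof -
  have "[Fpoly q n x y1 y2 c = (\<Prod>i<n. if int q dvd (int (c i) - int (x i) - int (y2 i) + int (y1 i)) then 1 else 0)] (mod int q)"
    unfolding Fpoly_def
  proof (rule cong_prod)
    fix i
    show "[1 - (int (c i) - int (x i) - int (y2 i) + int (y1 i))^(q-1) = (if int q dvd (int (c i) - int (x i) - int (y2 i) + int (y1 i)) then 1 else 0)] (mod int q)"
      unfolding cong_iff_dvd_diff by (rule factor_delta[OF pq])
  qed
  then show ?thesis by (simp add: prod_indicator cong_iff_dvd_diff)
qed

lemma Fqn_lt: "v \<in> Fqn q n \<Longrightarrow> q > 0 \<Longrightarrow> v i < q"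
  unfolding Fqn_def by (cases "i < n") auto

lemma eq_of_dvd:
  assumes "u < q" "w < q" "int q dvd (int u - int w)"
  shows "u = w"
proof -
  have "int u mod int q = int w mod int q" using assms(3) by (simp add: mod_eq_dvd_iff)
  then have "int u = int w" using assms(1,2) by simp
  then show ?thesis by simp
qed

lemma col_identity:
  fixes q n :: nat and S :: "((nat \<Rightarrow> nat) \<times> (nat \<Rightarrow> nat)) set"
  assumes pq: "prime q" and SF: "S \<subseteq> Fqn q n \<times> Fqn q n"
    and hyp: "\<not> (\<exists>x y y' d. x \<in> Fqn q n \<and> y \<in> Fqn q n \<and> y' \<in> Fqn q n \<and> d \<in> Fqn q n
            \<and> d \<noteq> (\<lambda>_. 0)
            \<and> (x, y) \<in> S \<and> (x, vadd q y d) \<in> S \<and> (vadd q x d, y') \<in> S)"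
    and fA: "finite A" and A: "A = fst ` S"
    and s1: "(x, y1) \<in> S" and s2: "(x, y2) \<in> S"
  shows "int q dvd ((\<Sum>c\<in>A. v c * Fpoly q n x y1 y2 c) - (if y1 = y2 then v x else 0))"
proof -
  have q0: "q > 0" using prime_gt_0_nat[OF pq] by simp
  have xF: "x \<in> Fqn q n" and y1F: "y1 \<in> Fqn q n" and y2F: "y2 \<in> Fqn q n" using s1 s2 SF by auto
  define cond where "cond = (\<lambda>c. \<forall>i<n. int q dvd (int (c i) - int (x i) - int (y2 i) + int (y1 i)))"
  have AF: "\<And>c. c \<in> A \<Longrightarrow> c \<in> Fqn q n" using A SF by auto
  have step1: "int q dvd ((\<Sum>c\<in>A. v c * Fpoly q n x y1 y2 c) - (\<Sum>c\<in>A. v c * (if cond c then 1 else 0)))"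
  proof -
    have "(\<Sum>c\<in>A. v c * Fpoly q n x y1 y2 c) - (\<Sum>c\<in>A. v c * (if cond c then 1 else 0))
        = (\<Sum>c\<in>A. v c * (Fpoly q n x y1 y2 c - (if cond c then 1 else 0)))"
      by (simp add: sum_subtractf right_diff_distrib)
    also have "int q dvd \<dots>"
      using Fpoly_delta[OF pq] unfolding cond_def by (intro dvd_sum dvd_mult) auto
    finally show ?thesis .
  qed
  have sumeq: "(\<Sum>c\<in>A. v c * (if cond c then 1 else 0)) = (\<Sum>c\<in>{c\<in>A. cond c}. v c)"
  proof -
    have "(\<Sum>c\<in>A. v c * (if cond c then 1 else 0)) = (\<Sum>c\<in>A. if cond c then v c else 0)"
      by (rule sum.cong) auto
    then show ?thesis using fA by (simp add: sum.inter_filter)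
  qed
  have set: "{c\<in>A. cond c} = (if y1 = y2 then {x} else {})"
  proof (cases "y1 = y2")
    case True
    have "c = x" if "c \<in> A" "cond c" for c
    proof
      fix i
      have cF: "c \<in> Fqn q n" using AF that(1) by simp
      show "c i = x i"
      proof (cases "i < n")
        case True
        have "int q dvd (int (c i) - int (x i) - int (y2 i) + int (y1 i))"
          using that(2) True unfolding cond_def by blast
        then have "int q dvd (int (c i) - int (x i))" using \<open>y1 = y2\<close> by simp
        then show ?thesis by (rule eq_of_dvd[OF Fqn_lt[OF cF q0] Fqn_lt[OF xF q0]])
      next
        case False
        then show ?thesis using cF xF by (simp add: Fqn_def)
      qed
    qed
    moreover have "x \<in> A" using A s1 by (simp add: rev_image_eqI)
    moreover have "cond x" using True unfolding cond_def by simp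
    ultimately have "{c\<in>A. cond c} = {x}" by blast
    then show ?thesis using True by simp
  next
    case False
    have "\<not> (c \<in> A \<and> cond c)" for c
    proof
      assume c: "c \<in> A \<and> cond c"
      then obtain y' where cy: "(c, y') \<in> S" using A by force
      have cF: "c \<in> Fqn q n" and y'F: "y' \<in> Fqn q n" using cy SF by auto
      define d where "d = (\<lambda>i. (y2 i + q - y1 i) mod q)"
      have lt: "\<And>v i. v \<in> Fqn q n \<Longrightarrow> v i < q" using Fqn_lt q0 by blast
      have dF: "d \<in> Fqn q n" using y1F y2F q0 unfolding d_def Fqn_def by auto
      have vy: "vadd q y1 d = y2"
      proof
        fix i
        have "vadd q y1 d i = (y1 i + (y2 i + q - y1 i)) mod q"
          unfolding vadd_def d_def by (simp add: mod_add_right_eq)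
        also have "\<dots> = (y2 i + q) mod q" using lt[OF y1F, of i] by simp
        also have "\<dots> = y2 i" using lt[OF y2F, of i] by simp
        finally show "vadd q y1 d i = y2 i" .
      qed
      have vx: "vadd q x d = c"
      proof
        fix i
        have e: "vadd q x d i = (x i + (y2 i + q - y1 i)) mod q"
          unfolding vadd_def d_def by (simp add: mod_add_right_eq)
        show "vadd q x d i = c i"
        proof (cases "i < n")
          case False
          then show ?thesis using e xF y1F y2F cF by (simp add: Fqn_def)
        next
          case True
          have le: "y1 i \<le> y2 i + q" using lt[OF y1F, of i] by simp
          have "int ((x i + (y2 i + q - y1 i)) mod q) = (int (x i) + int (y2 i) + int q - int (y1 i)) mod int q"
            using le by (simp add: of_nat_mod of_nat_diff add.assoc)
          also have "\<dots> = int (c i) mod int q"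
          proof -
            have "int q dvd (int (c i) - int (x i) - int (y2 i) + int (y1 i))"
              using c True unfolding cond_def by auto
            then have "int q dvd ((int (x i) + int (y2 i) + int q - int (y1 i)) - int (c i))"
            proof -
              assume h: "int q dvd (int (c i) - int (x i) - int (y2 i) + int (y1 i))"
              have e2: "(int (x i) + int (y2 i) + int q - int (y1 i)) - int (c i)
                   = int q - (int (c i) - int (x i) - int (y2 i) + int (y1 i))" by simp
              show ?thesis unfolding e2 by (rule dvd_diff[OF dvd_refl h])
            qed
            then show ?thesis by (simp add: mod_eq_dvd_iff)
          qed
          also have "\<dots> = int (c i)" using lt[OF cF, of i] by simp
          finally show ?thesis using e by simp
        qed
      qed
      have dnz: "d \<noteq> (\<lambda>_. 0)"
      proof
        assume "d = (\<lambda>_. 0)"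
        then have "vadd q y1 d = y1" using lt[OF y1F] by (auto simp: vadd_def)
        then show False using vy False by simp
      qed
      have "\<exists>x y y' d. x \<in> Fqn q n \<and> y \<in> Fqn q n \<and> y' \<in> Fqn q n \<and> d \<in> Fqn q n
            \<and> d \<noteq> (\<lambda>_. 0)
            \<and> (x, y) \<in> S \<and> (x, vadd q y d) \<in> S \<and> (vadd q x d, y') \<in> S"
        apply (rule exI[of _ x], rule exI[of _ y1], rule exI[of _ y'], rule exI[of _ d])
        using xF y1F y'F dF dnz s1 s2 cy unfolding vy vx by simp
      then show False using hyp by blast
    qed
    then show ?thesis using False by auto
  qed
  show ?thesis
  proof (cases "y1 = y2")
    case True
    then show ?thesis using step1 sumeq set by simp
  next
    case False
    then show ?thesis using step1 sumeq set by simp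
  qed
qed

lemma M_le:
  fixes q n :: nat and t :: real
  assumes q1: "q \<ge> 1" and t: "0 < t" "t < 1"
  shows "real (card (Elow q n)) \<le> (t powr (- (real q - 1) / 3) * (\<Sum>i<q. t ^ i)) ^ n"
proof -
  define \<beta> where "\<beta> = real ((q - 1) * n) / 3"
  define g where "g = (\<lambda>a. t ^ dgr n a * t powr (- \<beta>))"
  have g1: "1 \<le> g a" if "a \<in> Elow q n" for a
  proof -
    have h: "3 * dgr n a \<le> (q - 1) * n" using that unfolding Elow_def by auto
    then have "real (3 * dgr n a) \<le> real ((q - 1) * n)" by (simp only: of_nat_le_iff)
    then have le: "real (dgr n a) \<le> \<beta>" unfolding \<beta>_def by simp
    have "g a = t powr (real (dgr n a) + - \<beta>)"
      unfolding g_def by (simp only: powr_add powr_realpow[OF t(1)])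
    also have "\<dots> = inverse (t powr (\<beta> - real (dgr n a)))"
      using powr_minus[of t "\<beta> - real (dgr n a)"] by simp
    finally have ga: "g a = inverse (t powr (\<beta> - real (dgr n a)))" .
    have "t powr (\<beta> - real (dgr n a)) \<le> 1" using le t by (intro powr_le1) auto
    moreover have "t powr (\<beta> - real (dgr n a)) > 0" using t by simp
    ultimately show ?thesis unfolding ga by (simp add: one_le_inverse)
  qed
  have g0: "0 \<le> g a" for a unfolding g_def using t by simp
  have "real (card (Elow q n)) = (\<Sum>a\<in>Elow q n. 1)" by simp
  also have "\<dots> \<le> (\<Sum>a\<in>Elow q n. g a)" using g1 by (intro sum_mono) auto
  also have "\<dots> \<le> (\<Sum>a\<in>Fqn q n. g a)"
    using finite_Fqn g0 by (intro sum_mono2) (auto simp: Elow_def)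
  also have "\<dots> = t powr (- \<beta>) * (\<Sum>a\<in>Fqn q n. \<Prod>i<n. (\<lambda>i j. t ^ j) i (a i))"
    unfolding g_def dgr_def by (simp add: power_sum sum_distrib_left mult.commute)
  also have "\<dots> = t powr (- \<beta>) * (\<Sum>i<q. t ^ i) ^ n"
    by (subst sum_prod_Fqn) simp
  also have "\<dots> = (t powr (- (real q - 1) / 3) * (\<Sum>i<q. t ^ i)) ^ n"
  proof -
    have "(t powr (- (real q - 1) / 3)) ^ n = (t powr (- (real q - 1) / 3)) powr (real n)"
      using t by (simp add: powr_realpow)
    also have "\<dots> = t powr (- \<beta>)"
    proof -
      have eqb: "- (real q - 1) / 3 * real n = - \<beta>"
        unfolding \<beta>_def using q1 by (simp add: of_nat_diff field_simps)
      show ?thesis unfolding powr_powr eqb ..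
    qed
    finally show ?thesis by (simp add: power_mult_distrib)
  qed
  finally show ?thesis .
qed

lemma Z_bound:
  fixes q n :: nat and A :: "(nat \<Rightarrow> nat) set"
  assumes pq: "prime q" and fA: "finite A"
  shows "card {x\<in>A. \<forall>v. (\<forall>e\<in>Elow q n. int q dvd Vs n A v e) \<longrightarrow> int q dvd v x} \<le> card (Elow q n)"
proof (rule ccontr)
  define Z where "Z = {x\<in>A. \<forall>v. (\<forall>e\<in>Elow q n. int q dvd Vs n A v e) \<longrightarrow> int q dvd v x}"
  assume "\<not> card {x\<in>A. \<forall>v. (\<forall>e\<in>Elow q n. int q dvd Vs n A v e) \<longrightarrow> int q dvd v x} \<le> card (Elow q n)"
  then have lt: "card (Elow q n) < card Z" unfolding Z_def by simp
  have fZ: "finite Z" using fA unfolding Z_def by simp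
  obtain w where w: "\<exists>k\<in>Z. \<not> int q dvd w k" "\<forall>e\<in>Elow q n. int q dvd (\<Sum>c\<in>Z. mnm n c e * w c)"
    using linalg_kernel[OF pq finite_Elow fZ lt, of "\<lambda>e c. mnm n c e"] by blast
  define w' where "w' = (\<lambda>c. if c \<in> Z then w c else 0)"
  have ZA: "Z \<subseteq> A" unfolding Z_def by auto
  have "int q dvd Vs n A w' e" if "e \<in> Elow q n" for e
  proof -
    have "Vs n A w' e = (\<Sum>c\<in>A. if c \<in> Z then w c * mnm n c e else 0)"
      unfolding Vs_def w'_def by (rule sum.cong) auto
    also have "\<dots> = (\<Sum>c\<in>Z. w c * mnm n c e)"
    proof -
      have "{c \<in> A. c \<in> Z} = Z" using ZA by auto
      then show ?thesis using fA by (simp add: sum.inter_filter[symmetric])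
    qed
    finally show ?thesis using w(2) that by (simp add: mult.commute)
  qed
  moreover from w(1) obtain k where k: "k \<in> Z" "\<not> int q dvd w k" by blast
  ultimately have "int q dvd w' k" using k(1) unfolding Z_def by blast
  then show False using k unfolding w'_def by simp
qed

theorem theorem1p2:
  fixes q n :: nat and S :: "((nat \<Rightarrow> nat) \<times> (nat \<Rightarrow> nat)) set"
  assumes "prime q" and "q \<ge> 2" and "n \<ge> 1"
    and "S \<subseteq> Fqn q n \<times> Fqn q n"
    and "\<not> (\<exists>x y y' d. x \<in> Fqn q n \<and> y \<in> Fqn q n \<and> y' \<in> Fqn q n \<and> d \<in> Fqn q n
            \<and> d \<noteq> (\<lambda>_. 0)
            \<and> (x, y) \<in> S \<and> (x, vadd q y d) \<in> S \<and> (vadd q x d, y') \<in> S)"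
  shows "real (card S) \<le> 3 * real q powr ((2 - c_const q) * real n)"
proof -
  note pq = assms(1) and SF = assms(4) and hyp = assms(5)
  define A where "A = fst ` S"
  define Sx where "Sx = (\<lambda>x. {y. (x, y) \<in> S})"
  define E where "E = Elow q n"
  define M where "M = card E"
  define Z where "Z = {x\<in>A. \<forall>v. (\<forall>e\<in>Elow q n. int q dvd Vs n A v e) \<longrightarrow> int q dvd v x}"
  have fS: "finite S" using SF by (rule finite_subset) (simp add: finite_Fqn)
  have fA: "finite A" unfolding A_def using fS by simp
  have AF: "A \<subseteq> Fqn q n" unfolding A_def using SF by auto
  have SxF: "Sx x \<subseteq> Fqn q n" for x unfolding Sx_def using SF by auto
  have fSx: "finite (Sx x)" for x using SxF finite_Fqn by (rule finite_subset)
  have cSx: "card (Sx x) \<le> q ^ n" for x using card_mono[OF finite_Fqn SxF] card_Fqn by simp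
  have cA: "card A \<le> q ^ n" using card_mono[OF finite_Fqn AF] card_Fqn by simp
  have Sig: "S = Sigma A Sx" unfolding A_def Sx_def by force
  have cS: "card S = (\<Sum>x\<in>A. card (Sx x))" unfolding Sig using fA fSx by simp
  have ZA: "Z \<subseteq> A" unfolding Z_def by auto
  have cZ: "card Z \<le> M" unfolding Z_def M_def E_def by (rule Z_bound[OF pq fA])
  have good: "card (Sx x) \<le> 2 * M" if x: "x \<in> A - Z" for x
  proof -
    from x obtain v where v: "\<forall>e\<in>Elow q n. int q dvd Vs n A v e" "\<not> int q dvd v x"
      unfolding Z_def by blast
    show ?thesis unfolding M_def E_def
    proof (rule col_bound[OF pq fA fSx _ v(2)])
      show "\<And>e. e \<in> Elow q n \<Longrightarrow> int q dvd Vs n A v e" using v(1) by blast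
      fix y1 y2 assume "y1 \<in> Sx x" "y2 \<in> Sx x"
      then have "(x, y1) \<in> S" "(x, y2) \<in> S" unfolding Sx_def by auto
      then show "int q dvd ((\<Sum>c\<in>A. v c * Fpoly q n x y1 y2 c) - (if y1 = y2 then v x else 0))"
        by (rule col_identity[OF pq SF hyp fA A_def])
    qed
  qed
  have "card S = (\<Sum>x\<in>A - Z. card (Sx x)) + (\<Sum>x\<in>Z. card (Sx x))"
    unfolding cS by (rule sum.subset_diff[OF ZA fA])
  also have "\<dots> \<le> card (A - Z) * (2 * M) + card Z * q ^ n"
  proof (rule add_mono)
    show "(\<Sum>x\<in>A - Z. card (Sx x)) \<le> card (A - Z) * (2 * M)"
      using sum_bounded_above[of "A - Z" "\<lambda>x. card (Sx x)" "2 * M"] good by simp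
    show "(\<Sum>x\<in>Z. card (Sx x)) \<le> card Z * q ^ n"
      using sum_bounded_above[of "Z" "\<lambda>x. card (Sx x)" "q ^ n"] cSx by simp
  qed
  also have "\<dots> \<le> q ^ n * (2 * M) + M * q ^ n"
  proof (intro add_mono mult_right_mono)
    show "card (A - Z) \<le> q ^ n" using cA card_mono[OF fA, of "A - Z"] by auto
  qed (use cZ in auto)
  finally have cS3: "card S \<le> 3 * M * q ^ n" by simp
  define f where "f = (\<lambda>t::real. t powr (- (real q - 1) / 3) * (\<Sum>i<q. t ^ i))"
  define I where "I = (INF t\<in>{0<..<1::real}. f t)"
  have n0: "n > 0" using assms(3) by simp
  have q1: "q \<ge> 1" using assms(2) by simp
  have f0: "0 \<le> f t" if "0 < t" for t unfolding f_def using that by (intro mult_nonneg_nonneg sum_nonneg) auto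
  have rootle: "root n (real M) \<le> f t" if t: "t \<in> {0<..<1}" for t
  proof -
    have "real M \<le> (f t) ^ n" unfolding M_def E_def f_def using M_le[OF q1] t by auto
    then have "root n (real M) \<le> root n ((f t) ^ n)" using n0 by simp
    also have "\<dots> = f t" using n0 f0 t by (simp add: real_root_power_cancel)
    finally show ?thesis .
  qed
  have rI: "root n (real M) \<le> I" unfolding I_def
    by (rule cINF_greatest) (use rootle in auto)
  have M1: "M \<ge> 1"
  proof -
    have "(\<lambda>_. 0) \<in> E" unfolding E_def Elow_def Fqn_def dgr_def using q1 by auto
    then have "E \<noteq> {}" by blast
    then have "card E > 0" using finite_Elow[of q n] unfolding E_def by (simp add: card_gt_0_iff)
    then show ?thesis unfolding M_def by simp
  qed
  have "1 \<le> root n (real M)" using M1 n0 by simp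
  then have I1: "1 \<le> I" using rI by linarith
  have MI: "real M \<le> I ^ n"
  proof -
    have "real M = (root n (real M)) ^ n" using n0 by simp
    also have "\<dots> \<le> I ^ n" using rI n0 by (intro power_mono) auto
    finally show ?thesis .
  qed
  have cc: "c_const q = 1 - log (real q) I" unfolding c_const_def I_def f_def ..
  have q1r: "real q > 1" using assms(2) by simp
  have "real q powr ((2 - c_const q) * real n) = (real q powr (1 + log (real q) I)) powr real n"
    unfolding cc powr_powr by simp
  also have "\<dots> = (real q * I) powr real n"
    using q1r I1 by (simp add: powr_add)
  also have "\<dots> = (real q * I) ^ n" using q1r I1 by (intro powr_realpow) simp
  also have "\<dots> = real q ^ n * I ^ n" by (simp add: power_mult_distrib)
  finally have eqR: "real q powr ((2 - c_const q) * real n) = real q ^ n * I ^ n" .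
  have "real (card S) \<le> real (3 * M * q ^ n)" using cS3 by (simp only: of_nat_le_iff)
  also have "\<dots> = 3 * real M * real q ^ n" by simp
  finally have "real (card S) \<le> 3 * real M * real q ^ n" .
  also have "\<dots> \<le> 3 * (I ^ n) * real q ^ n" using MI by (intro mult_right_mono mult_left_mono) auto
  also have "\<dots> = 3 * real q powr ((2 - c_const q) * real n)" unfolding eqR by simp
  finally show ?thesis .
qed

end
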